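(* Let $m,k,s$ be positive integers with $s\ge k$, and $\Sigma_W\in\mathbb{R}^{k\times k}$ symmetric positive definite with symmetric positive-definite square root $\Sigma_W^{1/2}$. On $\mathcal{Z}=\mathbb{R}^{m+s}\times\mathbb{R}^{(m+s)\times k}$, write $z=(y_x,y_\perp,w_x,w_\perp)$ with $y_x\in\mathbb{R}^m,y_\perp\in\mathbb{R}^s,w_x\in\mathbb{R}^{m\times k},w_\perp\in\mathbb{R}^{s\times k}$. For any $p\in\mathbb{R}$, define (wherever $w_\perp$ has full column rank and $\hat\gamma^{\mathrm{OLS}}\neq 0$) $$\hat\gamma^{\mathrm{OLS}}=(w_\perp'w_\perp)^{-1}w_\perp'y_\perp,\quad \hat\gamma=\left(1-p\,\frac{y_\perp'y_\perp-\|\hat\gamma^{\mathrm{OLS}}\|^2_{w_\perp'w_\perp}}{\|\hat\gamma^{\mathrm{OLS}}\|^2_{w_\perp'w_\perp}}\right)\hat\gamma^{\mathrm{OLS}},\quad d(z)=y_x-w_x\hat\gamma\in\mathbb{R}^m.$$ Let $G=\mathbb{R}^m\times O(m)\times O(k)\times O(s)$ act by $m_{\mathcal{Z}}(g,(y_x,y_\perp,w_x,w_\perp))=(g_xy_x+g_\mu,\ g_\perp y_\perp,\ g_xw_x\Sigma_W^{-1/2}g_W'\Sigma_W^{1/2},\ g_\perp w_\perp\Sigma_W^{-1/2}g_W'\Sigma_W^{1/2})$ on $\mathcal{Z}$ and $m_{\mathcal{A}}(g,a)=g_xa+g_\mu$ on $\mathcal{A}=\mathbb{R}^m$, for $g=(g_\mu,g_x,g_W,g_\perp)$.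 Then $d$ is invariant: $d(m_{\mathcal{Z}}(g,z))=m_{\mathcal{A}}(g,d(z))$ for all $g\in G$ and all $z$ in the domain of $d$.
   Context: $\|v\|_A=\sqrt{v'Av}$. $O(d)$ is the group of orthogonal $d\times d$ matrices. The map $d$ is the canonical-coordinate form of the paper's two-step shrinkage estimator of $\mu_x=q_x'x\beta$: with $s=n-m-1$, $y_x=q_x'Y$, $y_\perp=q_\perp'Y$, $w_x=q_x'W$, $w_\perp=q_\perp'W$ for an orthonormal basis $(q_{\mathbf{1}},q_x,q_\perp)$ of $\mathbb{R}^n$ adapted to $(\mathbf{1}_n,x)$, and $y_\perp'y_\perp-\|\hat\gamma^{\mathrm{OLS}}\|^2_{w_\perp'w_\perp}$ equals the sum of squared residuals of the regression of $Y$ on $\mathbf{1},X,W$. *)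

theory Defs
  imports "HOL-Analysis.Analysis"
begin

definition sym_pos_def :: "real^'k^'k \<Rightarrow> bool" where
  "sym_pos_def A \<longleftrightarrow> transpose A = A \<and> (\<forall>x. x \<noteq> 0 \<longrightarrow> x \<bullet> (A *v x) > 0)"

definition wnorm2 :: "real^'k^'k \<Rightarrow> real^'k \<Rightarrow> real" where
  "wnorm2 A v = v \<bullet> (A *v v)"

definition gamma_ols :: "real^'s \<Rightarrow> real^'k^'s \<Rightarrow> real^'k" where
  "gamma_ols yp wp = matrix_inv (transpose wp ** wp) *v (transpose wp *v yp)"

definition gamma_hat :: "real \<Rightarrow> real^'s \<Rightarrow> real^'k^'s \<Rightarrow> real^'k" where
  "gamma_hat p yp wp =
     (let g = gamma_ols yp wp; q = wnorm2 (transpose wp ** wp) g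
      in (1 - p * ((yp \<bullet> yp - q) / q)) *\<^sub>R g)"

definition dest :: "real \<Rightarrow> real^'m \<Rightarrow> real^'s \<Rightarrow> real^'k^'m \<Rightarrow> real^'k^'s \<Rightarrow> real^'m" where
  "dest p yx yp wx wp = yx - wx *v gamma_hat p yp wp"

definition in_dom :: "real^'s \<Rightarrow> real^'k^'s \<Rightarrow> bool" where
  "in_dom yp wp \<longleftrightarrow> rank wp = CARD('k) \<and> gamma_ols yp wp \<noteq> 0"

end

theory Submission
  imports Defs
begin

declare transpose_matrix_vector[simp del]

lemma dot_transp: "(x::real^'n) \<bullet> (transpose (B::real^'n^'m) *v y) = (B *v x) \<bullet> y"
  by (metis dot_lmul_matrix vector_transpose_matrix)

lemma inv_props:
  assumes "invertible (A::real^'n^'n)"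
  shows "A ** matrix_inv A = mat 1" "matrix_inv A ** A = mat 1"
proof -
  have "\<exists>A'. A ** A' = mat 1 \<and> A' ** A = mat 1" using assms invertible_def by blast
  then have "A ** matrix_inv A = mat 1 \<and> matrix_inv A ** A = mat 1"
    unfolding matrix_inv_def by (rule someI_ex)
  then show "A ** matrix_inv A = mat 1" "matrix_inv A ** A = mat 1" by auto
qed

lemma inv_unique:
  assumes "invertible (A::real^'n^'n)" "B ** A = mat 1"
  shows "matrix_inv A = B"
proof -
  have "matrix_inv A = B ** A ** matrix_inv A" using assms(2) by simp
  also have "\<dots> = B" using inv_props(1)[OF assms(1)] by (metis matrix_mul_assoc matrix_mul_rid)
  finally show ?thesis .
qed

lemma inj_invertible:
  assumes "\<And>x. (A::real^'n^'n) *v x = 0 \<Longrightarrow> x = 0"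
  shows "invertible A"
proof -
  have "inj ((*v) A)"
    by (metis (no_types, lifting) assms injI matrix_vector_mult_diff_distrib right_minus_eq)
  then have "rank A = CARD('n)" using full_rank_injective by blast
  then show ?thesis using invertible_det_nz[of A] det_eq_0_rank[of A] by auto
qed

theorem mainTheorem6:
  fixes p :: real
    and SigmaW SigmaWhalf :: "real^'k^'k"
    and g_mu :: "real^'m" and g_x :: "real^'m^'m" and g_W :: "real^'k^'k" and g_perp :: "real^'s^'s"
    and yx :: "real^'m" and yp :: "real^'s" and wx :: "real^'k^'m" and wp :: "real^'k^'s"
  assumes "CARD('s) \<ge> CARD('k)"
    and "sym_pos_def SigmaW"
    and "sym_pos_def SigmaWhalf"
    and "SigmaWhalf ** SigmaWhalf = SigmaW"
    and "orthogonal_matrix g_x" and "orthogonal_matrix g_W" and "orthogonal_matrix g_perp"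
    and "in_dom yp wp"
  shows "dest p (g_x *v yx + g_mu) (g_perp *v yp)
            (g_x ** wx ** matrix_inv SigmaWhalf ** transpose g_W ** SigmaWhalf)
            (g_perp ** wp ** matrix_inv SigmaWhalf ** transpose g_W ** SigmaWhalf)
         = g_x *v dest p yx yp wx wp + g_mu"
proof -
  define S where "S = SigmaWhalf"
  define M where "M = matrix_inv S ** transpose g_W ** S"
  define A where "A = transpose wp ** wp"
  define Mi where "Mi = matrix_inv M"
  define Ai where "Ai = matrix_inv A"
  define b where "b = transpose wp *v yp"
  have invS: "invertible S"
  proof (rule inj_invertible)
    fix x assume "S *v x = 0"
    then have "x \<bullet> (S *v x) = 0" by simp
    then show "x = 0" using assms(3) unfolding sym_pos_def_def S_def by force
  qed
  have invgW: "invertible (transpose g_W)"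
    using assms(6) unfolding orthogonal_matrix_def invertible_def
    by (metis matrix_transpose_mul transpose_mat transpose_transpose)
  have invSi: "invertible (matrix_inv S)"
    using inv_props[OF invS] unfolding invertible_def by blast
  have invM: "invertible M" unfolding M_def
    by (intro invertible_mult invSi invgW invS)
  have injwp: "inj ((*v) wp)" using assms(8) full_rank_injective unfolding in_dom_def by blast
  have invA: "invertible A"
  proof (rule inj_invertible)
    fix x assume "A *v x = 0"
    then have "x \<bullet> (transpose wp *v (wp *v x)) = 0" unfolding A_def
      by (simp add: matrix_vector_mul_assoc)
    then have "(wp *v x) \<bullet> (wp *v x) = 0" by (metis dot_transp)
    then have "wp *v x = wp *v 0" by simp
    then show "x = 0" using injwp by (meson injD)
  qed
  have MMi: "M ** Mi = mat 1" "Mi ** M = mat 1" using inv_props[OF invM] Mi_def by auto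
  have AAi: "A ** Ai = mat 1" "Ai ** A = mat 1" using inv_props[OF invA] Ai_def by auto
  have gp: "transpose g_perp ** g_perp = mat 1" using assms(7) orthogonal_matrix_def by blast
  have wp'eq: "g_perp ** wp ** matrix_inv SigmaWhalf ** transpose g_W ** SigmaWhalf = g_perp ** wp ** M"
    unfolding M_def S_def by (simp add: matrix_mul_assoc)
  have wx'eq: "g_x ** wx ** matrix_inv SigmaWhalf ** transpose g_W ** SigmaWhalf = g_x ** wx ** M"
    unfolding M_def S_def by (simp add: matrix_mul_assoc)
  have A'eq: "transpose (g_perp ** wp ** M) ** (g_perp ** wp ** M) = transpose M ** A ** M"
  proof -
    have "transpose (g_perp ** wp ** M) ** (g_perp ** wp ** M)
        = transpose M ** transpose wp ** (transpose g_perp ** g_perp) ** wp ** M"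
      by (simp add: matrix_transpose_mul matrix_mul_assoc)
    then show ?thesis using gp unfolding A_def by (simp add: matrix_mul_assoc)
  qed
  have invA': "invertible (transpose M ** A ** M)"
    by (intro invertible_mult invA invM transpose_invertible)
  have MiT: "transpose Mi ** transpose M = mat 1"
    by (metis MMi(1) matrix_transpose_mul transpose_mat)
  have inv'eq: "matrix_inv (transpose M ** A ** M) = Mi ** Ai ** transpose Mi"
  proof (rule inv_unique[OF invA'])
    have "Mi ** Ai ** transpose Mi ** (transpose M ** A ** M)
          = Mi ** Ai ** (transpose Mi ** transpose M) ** A ** M"
      by (simp add: matrix_mul_assoc)
    also have "\<dots> = Mi ** (Ai ** A) ** M" by (simp add: MiT matrix_mul_assoc)
    also have "\<dots> = mat 1" by (simp add: AAi MMi)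
    finally show "Mi ** Ai ** transpose Mi ** (transpose M ** A ** M) = mat 1" .
  qed
  have b'eq: "transpose (g_perp ** wp ** M) *v (g_perp *v yp) = transpose M *v b"
  proof -
    have "transpose (g_perp ** wp ** M) *v (g_perp *v yp)
        = transpose M ** transpose wp ** (transpose g_perp ** g_perp) *v yp"
      by (simp add: matrix_transpose_mul matrix_mul_assoc matrix_vector_mul_assoc)
    then show ?thesis using gp unfolding b_def by (simp add: matrix_vector_mul_assoc)
  qed
  define g where "g = gamma_ols yp wp"
  have g_eq: "g = Ai *v b" unfolding g_def gamma_ols_def Ai_def A_def b_def by simp
  have g'eq: "gamma_ols (g_perp *v yp) (g_perp ** wp ** M) = Mi *v g"
  proof -
    have "gamma_ols (g_perp *v yp) (g_perp ** wp ** M) = Mi ** Ai ** (transpose Mi ** transpose M) *v b"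
      unfolding gamma_ols_def A'eq b'eq inv'eq by (simp add: matrix_mul_assoc matrix_vector_mul_assoc)
    then show ?thesis using MiT g_eq by (simp add: matrix_vector_mul_assoc)
  qed
  have q'eq: "wnorm2 (transpose M ** A ** M) (Mi *v g) = wnorm2 A g"
  proof -
    have Mg: "M *v (Mi *v g) = g" by (simp add: matrix_vector_mul_assoc MMi)
    have "(transpose M ** A ** M) *v (Mi *v g) = transpose M *v (A *v (M *v (Mi *v g)))"
      by (simp add: matrix_vector_mul_assoc matrix_mul_assoc)
    then have "wnorm2 (transpose M ** A ** M) (Mi *v g) = (Mi *v g) \<bullet> (transpose M *v (A *v g))"
      unfolding wnorm2_def Mg by simp
    also have "\<dots> = (M *v (Mi *v g)) \<bullet> (A *v g)" by (rule dot_transp)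
    finally show ?thesis by (simp add: Mg wnorm2_def)
  qed
  have yy: "(g_perp *v yp) \<bullet> (g_perp *v yp) = yp \<bullet> yp"
    by (metis dot_transp gp matrix_vector_mul_assoc matrix_vector_mul_lid)
  have gh'eq: "gamma_hat p (g_perp *v yp) (g_perp ** wp ** M) = Mi *v gamma_hat p yp wp"
    unfolding gamma_hat_def Let_def g'eq A'eq q'eq yy
    by (simp add: g_def A_def matrix_vector_mult_scaleR)
  have "dest p (g_x *v yx + g_mu) (g_perp *v yp) (g_x ** wx ** M) (g_perp ** wp ** M)
      = g_x *v yx + g_mu - g_x *v (wx *v ((M ** Mi) *v gamma_hat p yp wp))"
    unfolding dest_def gh'eq by (simp add: matrix_vector_mul_assoc matrix_mul_assoc)
  also have "\<dots> = g_x *v dest p yx yp wx wp + g_mu"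
    by (simp add: MMi dest_def matrix_vector_mult_diff_distrib)
  finally show ?thesis unfolding wp'eq wx'eq .
qed

end
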